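(* Let $E$ be a row-finite source-free directed graph which contains a cycle without entrance, and let $(X, \mu)$ be a $\sigma$-finite measure space carrying an $E$-semibranching function system. If a $\Lambda$-projective representation of $C^*(E)$ on $L^2(X, \mu)$ arising from this system is monic, then for every vertex $v$ lying on a cycle without entrance, $D_v$ has no measurable subset $X_v$ with $0 < \mu(X_v) < \mu(D_v)$.
   Context: A directed graph $E$ is viewed as a 1-graph (category of finite paths, degree = length); row-finite: each vertex receives finitely many edges; source-free: each vertex receives at least one edge. A path $e_1e_2\cdots e_n$ has $s(e_i)=r(e_{i+1})$; it is a cycle if $s(e_n)=r(e_1)$; a cycle has an entrance if there are $i\le n$ and an edge $e$ with $r(e)=s(e_i)$ but $e\ne e_{i+1}$. $C^*(E)$ is the graph $C^*$-algebra (universal $C^*$-algebra of a Cuntz–Krieger family for the 1-graph). An $E$-semibranching function system on $(X,\mu)$: measurable sets $D_\lambda$, prefixing maps $\tau_\lambda:D_\lambda\to X$ for paths $\lambda$, ranges $R_\lambda$, coding maps $\tau^m$ ($m\in\mathbb{N}$), such that for each $m$ $\{\tau_\lambda: |\lambda|=m\}$ is a semibranching function system with coding map $\tau^m$ ($0<\mu(D_\lambda)<\infty$, ranges of finite measure, a.e. disjoint, covering $X$ a.e., $d(\mu\circ\tau_\lambda)/d\mu>0$ a.e., $\tau^m\circ\tau_\lambda=\mathrm{id}$), $\tau_v=\mathrm{id}$ for vertices, $\tau_\lambda\tau_\nu=\tau_{\lambda\nu}$ a.e., $\tau^m\tau^n=\tau^{m+n}$. A $\Lambda$-projective representation arising from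 it is $T_\lambda f=f_\lambda\cdot(f\circ\tau^{|\lambda|})$ for functions $f_\lambda\in L^2$ with $0\ne d(\mu\circ\tau_\lambda^{-1})/d\mu=|f_\lambda|^2$ and $f_\lambda(f_\nu\circ\tau^{|\lambda|})=f_{\lambda\nu}$. Monic: all $T_\lambda\ne0$ and some $\xi$ has $\overline{\mathrm{span}}\{T_\lambda T_\lambda^*\xi\}=L^2(X,\mu)$. *)

theory Defs
  imports "HOL-Analysis.Analysis"
begin

text \<open>A directed graph E has vertex set UNIV :: 'v set and edge set UNIV :: 'e set,
  with range map r and source map s. A finite path is a pair (v, [e1,...,en]):
  for n = 0 it is the vertex v; for n > 0 we require v = r e1 and s ei = r e(i+1).\<close>

type_synonym ('v,'e) gpath = "'v \<times> 'e list"

definition is_path :: "('e \<Rightarrow> 'v) \<Rightarrow> ('e \<Rightarrow> 'v) \<Rightarrow> ('v,'e) gpath \<Rightarrow> bool" where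
  "is_path r s p \<longleftrightarrow>
     (snd p \<noteq> [] \<longrightarrow> fst p = r (hd (snd p))) \<and>
     (\<forall>i. Suc i < length (snd p) \<longrightarrow> s (snd p ! i) = r (snd p ! Suc i))"

definition plen :: "('v,'e) gpath \<Rightarrow> nat" where
  "plen p = length (snd p)"

definition psource :: "('e \<Rightarrow> 'v) \<Rightarrow> ('v,'e) gpath \<Rightarrow> 'v" where
  "psource s p = (if snd p = [] then fst p else s (last (snd p)))"

text \<open>Concatenation lambda nu (meaningful when s(lambda) = r(nu)).\<close>
definition pcomp :: "('v,'e) gpath \<Rightarrow> ('v,'e) gpath \<Rightarrow> ('v,'e) gpath" where
  "pcomp p q = (fst p, snd p @ snd q)"

definition composable :: "('e \<Rightarrow> 'v) \<Rightarrow> ('e \<Rightarrow> 'v) \<Rightarrow> ('v,'e) gpath \<Rightarrow> ('v,'e) gpath \<Rightarrow> bool" where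
  "composable r s p q \<longleftrightarrow> is_path r s p \<and> is_path r s q \<and> psource s p = fst q"

definition row_finite :: "('e \<Rightarrow> 'v) \<Rightarrow> bool" where
  "row_finite r \<longleftrightarrow> (\<forall>v. finite {e. r e = v})"

definition source_free :: "('e \<Rightarrow> 'v) \<Rightarrow> bool" where
  "source_free r \<longleftrightarrow> (\<forall>v. {e. r e = v} \<noteq> {})"

text \<open>A cycle e1...en (list es, 0-indexed) and entrances (indices read cyclically,
  so e_{n+1} = e_1).\<close>
definition is_cycle :: "('e \<Rightarrow> 'v) \<Rightarrow> ('e \<Rightarrow> 'v) \<Rightarrow> 'e list \<Rightarrow> bool" where
  "is_cycle r s es \<longleftrightarrow> es \<noteq> [] \<and> is_path r s (r (hd es), es) \<and> s (last es) = r (hd es)"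

definition has_entrance :: "('e \<Rightarrow> 'v) \<Rightarrow> ('e \<Rightarrow> 'v) \<Rightarrow> 'e list \<Rightarrow> bool" where
  "has_entrance r s es \<longleftrightarrow>
     (\<exists>i < length es. \<exists>e. r e = s (es ! i) \<and> e \<noteq> es ! (Suc i mod length es))"

definition on_cycle_without_entrance :: "('e \<Rightarrow> 'v) \<Rightarrow> ('e \<Rightarrow> 'v) \<Rightarrow> 'v \<Rightarrow> bool" where
  "on_cycle_without_entrance r s v \<longleftrightarrow>
     (\<exists>es. is_cycle r s es \<and> \<not> has_entrance r s es \<and> v \<in> r ` set es)"

text \<open>d(mu o tau)/d mu exists and is positive a.e. on D.\<close>
definition pos_RN_deriv :: "'x measure \<Rightarrow> 'x set \<Rightarrow> ('x \<Rightarrow> 'x) \<Rightarrow> bool" where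
  "pos_RN_deriv M D t \<longleftrightarrow>
     (\<exists>\<Phi> \<in> borel_measurable M. (AE x in M. x \<in> D \<longrightarrow> 0 < \<Phi> x) \<and>
        (\<forall>A \<in> sets M. A \<subseteq> D \<longrightarrow> t ` A \<in> sets M \<and>
            emeasure M (t ` A) = (\<integral>\<^sup>+x\<in>A. \<Phi> x \<partial>M)))"

definition sbfs :: "'x measure \<Rightarrow> 'i set \<Rightarrow> ('i \<Rightarrow> 'x set) \<Rightarrow> ('i \<Rightarrow> 'x \<Rightarrow> 'x)
                     \<Rightarrow> ('x \<Rightarrow> 'x) \<Rightarrow> bool" where
  "sbfs M I D t cod \<longleftrightarrow>
     (\<forall>i\<in>I. D i \<in> sets M \<and> 0 < emeasure M (D i) \<and> emeasure M (D i) < \<infinity>) \<and>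
     (\<forall>i\<in>I. t i \<in> measurable (restrict_space M (D i)) M) \<and>
     (\<forall>i\<in>I. t i ` D i \<in> sets M \<and> emeasure M (t i ` D i) < \<infinity>) \<and>
     (\<forall>i\<in>I. \<forall>j\<in>I. i \<noteq> j \<longrightarrow> emeasure M (t i ` D i \<inter> t j ` D j) = 0) \<and>
     (AE x in M. \<exists>i\<in>I. x \<in> t i ` D i) \<and>
     (\<forall>i\<in>I. pos_RN_deriv M (D i) (t i)) \<and>
     cod \<in> measurable M M \<and>
     (\<forall>i\<in>I. AE x in M. x \<in> D i \<longrightarrow> cod (t i x) = x)"

text \<open>An E-semibranching function system.  The condition tau_lambda tau_nu = tau_{lambda nu}
  a.e. is read as equality a.e. of partial maps (same domain a.e., same values a.e.).\<close>
definition E_sbfs :: "('e \<Rightarrow> 'v) \<Rightarrow> ('e \<Rightarrow> 'v) \<Rightarrow> 'x measure \<Rightarrow> (('v,'e) gpath \<Rightarrow> 'x set)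
     \<Rightarrow> (('v,'e) gpath \<Rightarrow> 'x \<Rightarrow> 'x) \<Rightarrow> (nat \<Rightarrow> 'x \<Rightarrow> 'x) \<Rightarrow> bool" where
  "E_sbfs r s M D t cod \<longleftrightarrow>
     (\<forall>m. sbfs M {p. is_path r s p \<and> plen p = m} D t (cod m)) \<and>
     (\<forall>v. \<forall>x \<in> D (v, []). t (v, []) x = x) \<and>
     (\<forall>p q. composable r s p q \<longrightarrow>
        (AE x in M. (x \<in> D (pcomp p q) \<longleftrightarrow> x \<in> D q \<and> t q x \<in> D p) \<and>
                    (x \<in> D (pcomp p q) \<longrightarrow> t p (t q x) = t (pcomp p q) x))) \<and>
     (\<forall>m n. \<forall>x \<in> space M. cod m (cod n x) = cod (m + n) x)"

definition L2 :: "'x measure \<Rightarrow> ('x \<Rightarrow> complex) set" where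
  "L2 M = {g. g \<in> borel_measurable M \<and> integrable M (\<lambda>x. (cmod (g x))\<^sup>2)}"

definition Top :: "(nat \<Rightarrow> 'x \<Rightarrow> 'x) \<Rightarrow> (('v,'e) gpath \<Rightarrow> 'x \<Rightarrow> complex)
     \<Rightarrow> ('v,'e) gpath \<Rightarrow> ('x \<Rightarrow> complex) \<Rightarrow> 'x \<Rightarrow> complex" where
  "Top cod f p g = (\<lambda>x. f p x * g (cod (plen p) x))"

definition proj_rep :: "('e \<Rightarrow> 'v) \<Rightarrow> ('e \<Rightarrow> 'v) \<Rightarrow> 'x measure \<Rightarrow> (('v,'e) gpath \<Rightarrow> 'x set)
     \<Rightarrow> (('v,'e) gpath \<Rightarrow> 'x \<Rightarrow> 'x) \<Rightarrow> (nat \<Rightarrow> 'x \<Rightarrow> 'x)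
     \<Rightarrow> (('v,'e) gpath \<Rightarrow> 'x \<Rightarrow> complex) \<Rightarrow> bool" where
  "proj_rep r s M D t cod f \<longleftrightarrow>
     (\<forall>p. is_path r s p \<longrightarrow>
        f p \<in> L2 M \<and>
        (\<forall>A \<in> sets M. emeasure M {x \<in> D p. t p x \<in> A}
                        = (\<integral>\<^sup>+x\<in>A. ennreal ((cmod (f p x))\<^sup>2) \<partial>M)) \<and>
        \<not> (AE x in M. f p x = 0)) \<and>
     (\<forall>p q. composable r s p q \<longrightarrow>
        (AE x in M. f p x * f q (cod (plen p) x) = f (pcomp p q) x))"

text \<open>h is (a representative of) T^* xi: <T g, xi> = <g, h> for all g in L^2.\<close>
definition adjoint_value :: "'x measure \<Rightarrow> (('x \<Rightarrow> complex) \<Rightarrow> 'x \<Rightarrow> complex)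
     \<Rightarrow> ('x \<Rightarrow> complex) \<Rightarrow> ('x \<Rightarrow> complex) \<Rightarrow> bool" where
  "adjoint_value M T \<xi> h \<longleftrightarrow> h \<in> L2 M \<and>
     (\<forall>g \<in> L2 M. (LINT x|M. T g x * cnj (\<xi> x)) = (LINT x|M. g x * cnj (h x)))"

definition dense_span :: "'x measure \<Rightarrow> ('x \<Rightarrow> complex) set \<Rightarrow> bool" where
  "dense_span M S \<longleftrightarrow>
     (\<forall>g \<in> L2 M. \<forall>\<epsilon>::real. \<epsilon> > 0 \<longrightarrow>
        (\<exists>F c. finite F \<and> F \<subseteq> S \<and>
           (\<integral>\<^sup>+x. ennreal ((cmod (g x - (\<Sum>k\<in>F. c k * k x)))\<^sup>2) \<partial>M) < ennreal (\<epsilon>\<^sup>2)))"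

definition monic :: "('e \<Rightarrow> 'v) \<Rightarrow> ('e \<Rightarrow> 'v) \<Rightarrow> 'x measure \<Rightarrow> (nat \<Rightarrow> 'x \<Rightarrow> 'x)
     \<Rightarrow> (('v,'e) gpath \<Rightarrow> 'x \<Rightarrow> complex) \<Rightarrow> bool" where
  "monic r s M cod f \<longleftrightarrow>
     (\<forall>p. is_path r s p \<longrightarrow> (\<exists>g \<in> L2 M. \<not> (AE x in M. Top cod f p g x = 0))) \<and>
     (\<exists>\<xi> \<in> L2 M. dense_span M
        {Top cod f p h | p h. is_path r s p \<and> adjoint_value M (Top cod f p) \<xi> h})"

end

theory Submission imports Defs begin

lemma path_tail:
  assumes "is_path r s (w, e # l)"
  shows "is_path r s (s e, l)" "r e = w"
proof -
  from assms have h: "w = r e" "\<forall>i. Suc i < Suc (length l) \<longrightarrow> s ((e#l) ! i) = r ((e#l) ! Suc i)"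
    unfolding is_path_def by auto
  show "r e = w" using h by simp
  show "is_path r s (s e, l)" unfolding is_path_def
  proof (intro conjI allI impI)
    assume "snd (s e, l) \<noteq> []"
    then have "l \<noteq> []" by simp
    then show "fst (s e, l) = r (hd (snd (s e, l)))" using h(2)[rule_format, of 0]
      by (cases l) auto
  next
    fix i assume "Suc i < length (snd (s e, l))"
    then show "s (snd (s e, l) ! i) = r (snd (s e, l) ! Suc i)" using h(2)[rule_format, of "Suc i"] by simp
  qed
qed

lemma cycle_in:
  assumes c: "is_cycle r s es" and ne: "\<not> has_entrance r s es" and j: "j < length es"
    and e: "r e = r (es ! j)"
  shows "e = es ! j" "s (es ! j) \<in> r ` set es"
proof -
  let ?n = "length es"
  have es: "es \<noteq> []" and p: "is_path r s (r (hd es), es)" and cl: "s (last es) = r (hd es)"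
    using c unfolding is_cycle_def by auto
  have pp: "\<And>i. Suc i < ?n \<Longrightarrow> s (es ! i) = r (es ! Suc i)" using p unfolding is_path_def by auto
  define i where "i = (if j = 0 then ?n - 1 else j - 1)"
  have i: "i < ?n" using j es unfolding i_def by auto
  have si: "s (es ! i) = r (es ! j)"
  proof (cases "j = 0")
    case True
    then show ?thesis using cl es unfolding i_def by (simp add: last_conv_nth hd_conv_nth)
  next
    case False
    then show ?thesis using pp[of "j - 1"] j unfolding i_def by simp
  qed
  have sm: "Suc i mod ?n = j"
    using j es unfolding i_def by (cases "j = 0") auto
  have "\<forall>e. r e = s (es ! i) \<longrightarrow> e = es ! (Suc i mod ?n)" using ne i unfolding has_entrance_def by blast
  then show "e = es ! j" using si sm e by simp
  show "s (es ! j) \<in> r ` set es"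
  proof (cases "Suc j < ?n")
    case True
    then have "es ! Suc j \<in> set es" by simp
    then show ?thesis using pp[of j] True by simp
  next
    case False
    then have "j = ?n - 1" using j by simp
    then have "s (es ! j) = r (hd es)" using cl es by (simp add: last_conv_nth)
    then show ?thesis using es by simp
  qed
qed

lemma unique_paths:
  assumes c: "is_cycle r s es" and ne: "\<not> has_entrance r s es"
  shows "w \<in> r ` set es \<Longrightarrow> is_path r s (w, l1) \<Longrightarrow> is_path r s (w, l2) \<Longrightarrow> length l1 = length l2 \<Longrightarrow> l1 = l2"
proof (induction l1 arbitrary: w l2)
  case Nil
  then show ?case by simp
next
  case (Cons e l)
  then obtain e' l' where l2: "l2 = e' # l'" by (cases l2) auto
  from Cons.prems(1) obtain e0 where "e0 \<in> set es" "w = r e0" by blast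
  then obtain j where j: "j < length es" "w = r (es ! j)" by (auto simp: in_set_conv_nth)
  have t1: "is_path r s (s e, l)" "r e = w" using path_tail[OF Cons.prems(2)] by auto
  have t2: "is_path r s (s e', l')" "r e' = w" using path_tail[OF Cons.prems(3)[unfolded l2]] by auto
  have ej: "e = es ! j" using cycle_in(1)[OF c ne j(1)] t1(2) j(2) by simp
  have ej': "e' = es ! j" using cycle_in(1)[OF c ne j(1)] t2(2) j(2) by simp
  have ee: "e = e'" using ej ej' by simp
  have "s e \<in> r ` set es" using cycle_in(2)[OF c ne j(1)] \<open>e = es ! j\<close> by simp
  then have "l = l'" using Cons.IH[of "s e" l'] t1 t2 ee Cons.prems(4) l2 by simp
  then show ?case using ee l2 by simp
qed


lemma sum_le_AE_disj:
  fixes B :: "'i \<Rightarrow> 'x set"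
  assumes fin: "finite F" and B: "\<And>i. i \<in> F \<Longrightarrow> B i \<in> sets M" "\<And>i. i \<in> F \<Longrightarrow> B i \<subseteq> c"
    and c: "c \<in> sets M"
    and dis: "\<And>i j. i \<in> F \<Longrightarrow> j \<in> F \<Longrightarrow> i \<noteq> j \<Longrightarrow> B i \<inter> B j \<in> null_sets M"
  shows "(\<Sum>i\<in>F. emeasure M (B i)) \<le> emeasure M c"
proof -
  have "AE x in M. \<forall>ij\<in>F \<times> F. fst ij \<noteq> snd ij \<longrightarrow> x \<notin> B (fst ij) \<inter> B (snd ij)"
  proof (subst AE_ball_countable)
    show "countable (F \<times> F)" using fin by (simp add: countable_finite)
    show "\<forall>ij\<in>F \<times> F. AE x in M. fst ij \<noteq> snd ij \<longrightarrow> x \<notin> B (fst ij) \<inter> B (snd ij)"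
    proof
      fix ij assume ij: "ij \<in> F \<times> F"
      show "AE x in M. fst ij \<noteq> snd ij \<longrightarrow> x \<notin> B (fst ij) \<inter> B (snd ij)"
      proof (cases "fst ij = snd ij")
        case False
        then have "B (fst ij) \<inter> B (snd ij) \<in> null_sets M" using dis ij by auto
        from AE_not_in[OF this] show ?thesis by (rule AE_mp) auto
      qed simp
    qed
  qed
  then have ae: "AE x in M. (\<Sum>i\<in>F. indicator (B i) x) \<le> (indicator c x :: ennreal)"
  proof (rule AE_mp, intro AE_I2 impI)
    fix x assume h: "\<forall>ij\<in>F \<times> F. fst ij \<noteq> snd ij \<longrightarrow> x \<notin> B (fst ij) \<inter> B (snd ij)"
    show "(\<Sum>i\<in>F. indicator (B i) x) \<le> (indicator c x :: ennreal)"
    proof (cases "\<exists>i0\<in>F. x \<in> B i0")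
      case True
      then obtain i0 where i0: "i0 \<in> F" "x \<in> B i0" by blast
      have "(\<Sum>i\<in>F. indicator (B i) x :: ennreal) = (\<Sum>i\<in>F. if i = i0 then 1 else 0)"
      proof (rule sum.cong)
        fix i assume i: "i \<in> F"
        show "indicator (B i) x = (if i = i0 then 1 else (0::ennreal))"
        proof (cases "i = i0")
          case False
          have "(i, i0) \<in> F \<times> F" using i i0(1) by simp
          then have "fst (i, i0) \<noteq> snd (i, i0) \<longrightarrow> x \<notin> B (fst (i, i0)) \<inter> B (snd (i, i0))"
            using h by (rule bspec[rotated])
          then have "x \<notin> B i \<inter> B i0" using False by simp
          then show ?thesis using False i0 by (auto simp: indicator_def)
        qed (use i0 in auto)
      qed simp
      also have "\<dots> = 1" using i0 fin by simp
      also have "\<dots> = indicator c x" using i0 B by (auto simp: indicator_def)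
      finally show ?thesis by simp
    next
      case False
      then have "(\<Sum>i\<in>F. indicator (B i) x :: ennreal) = 0" by (auto simp: indicator_def)
      then show ?thesis by simp
    qed
  qed
  have "(\<Sum>i\<in>F. emeasure M (B i)) = (\<Sum>i\<in>F. \<integral>\<^sup>+x. indicator (B i) x \<partial>M)"
    by (rule sum.cong) (auto simp: B)
  also have "\<dots> = (\<integral>\<^sup>+x. (\<Sum>i\<in>F. indicator (B i) x) \<partial>M)"
    by (rule nn_integral_sum[symmetric]) (use B in auto)
  also have "\<dots> \<le> (\<integral>\<^sup>+x. indicator c x \<partial>M)" by (rule nn_integral_mono_AE[OF ae])
  also have "\<dots> = emeasure M c" using c by simp
  finally show ?thesis .
qed

lemma countable_family:
  fixes A :: "'i \<Rightarrow> 'x set"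
  assumes sf: "sigma_finite_measure M" and A: "\<And>i. A i \<in> sets M" "\<And>i. 0 < emeasure M (A i)"
    and dis: "\<And>i j. i \<noteq> j \<Longrightarrow> A i \<inter> A j \<in> null_sets M"
  shows "countable (UNIV :: 'i set)"
proof -
  obtain C :: "nat \<Rightarrow> 'x set" where C: "range C \<subseteq> sets M" "(\<Union>n. C n) = space M" "\<And>n. emeasure M (C n) \<noteq> \<infinity>"
    using sigma_finite_measure.sigma_finite[OF sf] by metis
  have Cs: "\<And>n. C n \<in> sets M" using C(1) by auto
  have fi: "emeasure M (A i \<inter> C n) \<noteq> \<infinity>" for i n
  proof -
    have "emeasure M (A i \<inter> C n) \<le> emeasure M (C n)" using Cs by (intro emeasure_mono) auto
    then show ?thesis using C(3)[of n] by (auto simp: top_unique)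
  qed
  define g where "g n i = measure M (A i \<inter> C n)" for n i
  have cnt: "countable {i \<in> UNIV. g n i \<noteq> 0}" for n
  proof (rule summable_countable_real)
    show "g n summable_on UNIV"
    proof (rule nonneg_bdd_above_summable_on)
      show "\<And>x. x \<in> UNIV \<Longrightarrow> 0 \<le> g n x" by (simp add: g_def)
      show "bdd_above (sum (g n) ` {F. F \<subseteq> UNIV \<and> finite F})"
      proof (rule bdd_aboveI2)
        fix F assume "F \<in> {F. F \<subseteq> (UNIV::'i set) \<and> finite F}"
        then have fin: "finite F" by simp
        have le: "(\<Sum>i\<in>F. emeasure M (A i \<inter> C n)) \<le> emeasure M (C n)"
        proof (rule sum_le_AE_disj[OF fin])
          fix i j assume "i \<in> F" "j \<in> F" "i \<noteq> j"
          have "A i \<inter> A j \<in> null_sets M" using dis \<open>i \<noteq> j\<close> by blast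
          then show "A i \<inter> C n \<inter> (A j \<inter> C n) \<in> null_sets M"
            by (rule null_sets_subset) (use A Cs in auto)
        qed (use A Cs in auto)
        have "sum (g n) F = enn2real (\<Sum>i\<in>F. emeasure M (A i \<inter> C n))"
          unfolding g_def measure_def using fi by (subst enn2real_sum) (auto simp: top.not_eq_extremum)
        also have "\<dots> \<le> enn2real (emeasure M (C n))" using le C(3)[of n] by (intro enn2real_mono) (auto simp: top.not_eq_extremum)
        finally show "sum (g n) F \<le> measure M (C n)" by (simp add: measure_def)
      qed
    qed
  qed
  have "UNIV \<subseteq> (\<Union>n. {i \<in> UNIV. g n i \<noteq> 0})"
  proof
    fix i :: 'i
    show "i \<in> (\<Union>n. {i \<in> UNIV. g n i \<noteq> 0})"
    proof (rule ccontr)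
      assume "i \<notin> (\<Union>n. {i \<in> UNIV. g n i \<noteq> 0})"
      then have z: "\<And>n. measure M (A i \<inter> C n) = 0" by (simp add: g_def)
      have "\<And>n. A i \<inter> C n \<in> null_sets M"
        using z fi A Cs by (auto simp: emeasure_eq_ennreal_measure intro!: null_setsI)
      then have "(\<Union>n. A i \<inter> C n) \<in> null_sets M" by (rule null_sets_UN)
      moreover have "(\<Union>n. A i \<inter> C n) = A i" using C(2) sets.sets_into_space[OF A(1)] by blast
      ultimately have "A i \<in> null_sets M" by simp
      then show False using A(2)[of i] by (auto dest: null_setsD1)
    qed
  qed
  then show ?thesis by (rule countable_subset) (use cnt in auto)
qed

lemma countable_paths:
  assumes cv: "countable (UNIV :: 'v set)" and rf: "row_finite (r :: 'e \<Rightarrow> 'v)"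
  shows "countable (UNIV :: ('v, 'e) gpath set)"
proof -
  have "(UNIV :: 'e set) = (\<Union>v. {e. r e = v})" by auto
  moreover have "countable (\<Union>v. {e. r e = v})"
    using cv rf unfolding row_finite_def by (auto intro: countable_finite)
  ultimately have ce: "countable (UNIV :: 'e set)" by simp
  then have "countable (lists (UNIV :: 'e set))" by (rule countable_lists)
  then have "countable (UNIV :: 'e list set)" by simp
  then have "countable ((UNIV :: 'v set) \<times> (UNIV :: 'e list set))"
    by (intro countable_SIGMA[OF cv])
  then show ?thesis by (simp only: UNIV_Times_UNIV)
qed

lemma cnj_meas[measurable]:
  assumes "k \<in> borel_measurable M"
  shows "(\<lambda>x. cnj (k x)) \<in> borel_measurable M"
proof -
  have "cnj \<in> borel_measurable borel"
    by (rule borel_measurable_continuous_onI) (rule linear_continuous_on[OF bounded_linear_cnj])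
  from measurable_compose[OF assms this] show ?thesis .
qed

lemma sq_aux: "((a::complex) * b) * cnj (a * c) = (cmod a)\<^sup>2 *\<^sub>R (b * cnj c)"
proof -
  have "(cmod a)\<^sup>2 *\<^sub>R (b * cnj c) = (a * cnj a) * (b * cnj c)"
    by (simp only: scaleR_conv_of_real complex_norm_square)
  then show ?thesis by (simp add: mult_ac)
qed

lemma L2_D:
  assumes "g \<in> L2 M"
  shows "g \<in> borel_measurable M" "(\<integral>\<^sup>+x. ennreal ((cmod (g x))\<^sup>2) \<partial>M) < \<infinity>"
proof -
  have i: "integrable M (\<lambda>x. (cmod (g x))\<^sup>2)" and m: "g \<in> borel_measurable M"
    using assms unfolding L2_def by auto
  show "g \<in> borel_measurable M" by (rule m)
  from i have "(\<integral>\<^sup>+x. ennreal (norm ((cmod (g x))\<^sup>2)) \<partial>M) < \<infinity>"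
    unfolding integrable_iff_bounded by blast
  then show "(\<integral>\<^sup>+x. ennreal ((cmod (g x))\<^sup>2) \<partial>M) < \<infinity>" by simp
qed

lemma L2_I:
  assumes m: "g \<in> borel_measurable M" and fin: "(\<integral>\<^sup>+x. ennreal ((cmod (g x))\<^sup>2) \<partial>M) < \<infinity>"
  shows "g \<in> L2 M"
proof -
  have "(\<lambda>x. (cmod (g x))\<^sup>2) \<in> borel_measurable M" using m by measurable
  then have "integrable M (\<lambda>x. (cmod (g x))\<^sup>2)"
    unfolding integrable_iff_bounded using fin by simp
  then show ?thesis unfolding L2_def using m by simp
qed

lemma L2_prod_int:
  assumes g: "g \<in> L2 M" and k: "k \<in> L2 M"
  shows "integrable M (\<lambda>x. g x * cnj (k x))"
proof (rule Bochner_Integration.integrable_bound)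
  show "integrable M (\<lambda>x. (cmod (g x))\<^sup>2 + (cmod (k x))\<^sup>2)" using assms unfolding L2_def by auto
  have [measurable]: "g \<in> borel_measurable M" "k \<in> borel_measurable M" using assms unfolding L2_def by auto
  show "(\<lambda>x. g x * cnj (k x)) \<in> borel_measurable M" by measurable
  show "AE x in M. norm (g x * cnj (k x)) \<le> norm ((cmod (g x))\<^sup>2 + (cmod (k x))\<^sup>2)"
  proof (rule AE_I2)
    fix x
    have a: "0 \<le> cmod (g x)" "0 \<le> cmod (k x)" by auto
    have "norm (g x * cnj (k x)) = cmod (g x) * cmod (k x)" by (simp add: norm_mult)
    also have "\<dots> \<le> (cmod (g x))\<^sup>2 + (cmod (k x))\<^sup>2"
      using sum_squares_bound[of "cmod (g x)" "cmod (k x)"] mult_nonneg_nonneg[OF a] by linarith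
    also have "\<dots> = norm ((cmod (g x))\<^sup>2 + (cmod (k x))\<^sup>2)" by simp
    finally show "norm (g x * cnj (k x)) \<le> norm ((cmod (g x))\<^sup>2 + (cmod (k x))\<^sup>2)" .
  qed
qed

lemma u_zero_case:
  fixes \<xi> :: "'x \<Rightarrow> complex"
  assumes xi: "\<xi> \<in> L2 M" and Z: "Z \<in> sets M" "Z \<subseteq> Dv" "0 < emeasure M Z" "emeasure M Z < \<infinity>"
    and a0: "(LINT x|M. indicator Z x * (cmod (\<xi> x))\<^sup>2) = 0"
  shows "\<exists>u\<in>L2 M. (\<forall>x. x \<notin> Dv \<longrightarrow> u x = 0) \<and> (LINT x|M. u x * cnj (\<xi> x)) = 0 \<and> 0 < (LINT x|M. (cmod (u x))\<^sup>2)"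
proof -
  define u where "u x = complex_of_real (indicator Z x)" for x
  have xim[measurable]: "\<xi> \<in> borel_measurable M" using L2_D(1)[OF xi] .
  have um[measurable]: "u \<in> borel_measurable M" unfolding u_def[abs_def] using Z(1) by measurable
  have sq: "(cmod (u x))\<^sup>2 = indicator Z x" for x by (simp add: u_def indicator_def)
  have uL2: "u \<in> L2 M"
  proof (rule L2_I[OF um])
    have "(\<integral>\<^sup>+x. ennreal ((cmod (u x))\<^sup>2) \<partial>M) = (\<integral>\<^sup>+x. indicator Z x \<partial>M)"
      by (rule nn_integral_cong) (simp add: sq indicator_def)
    also have "\<dots> = emeasure M Z" using Z(1) by simp
    finally show "(\<integral>\<^sup>+x. ennreal ((cmod (u x))\<^sup>2) \<partial>M) < \<infinity>" using Z(4) by simp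
  qed
  have int: "integrable M (\<lambda>x. indicator Z x * (cmod (\<xi> x))\<^sup>2)"
    using integrable_mult_indicator[OF Z(1), of "\<lambda>x. (cmod (\<xi> x))\<^sup>2"] xi unfolding L2_def by simp
  have "AE x in M. indicator Z x * (cmod (\<xi> x))\<^sup>2 = 0"
    using integral_nonneg_eq_0_iff_AE[OF int] a0 by simp
  then have orth: "(LINT x|M. u x * cnj (\<xi> x)) = 0"
    by (intro integral_eq_zero_AE) (rule AE_mp, auto simp: u_def indicator_def)
  have "(LINT x|M. (cmod (u x))\<^sup>2) = (LINT x|M. indicator Z x)" by (simp add: sq)
  also have "\<dots> = measure M Z" using Z(1) sets.sets_into_space[OF Z(1)] by (simp add: Int_absorb2)
  finally have pos: "0 < (LINT x|M. (cmod (u x))\<^sup>2)"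
    using Z(3,4) by (simp add: emeasure_eq_ennreal_measure)
  have "\<forall>x. x \<notin> Dv \<longrightarrow> u x = 0" using Z(2) by (auto simp: u_def indicator_def)
  then show ?thesis using uL2 orth pos by blast
qed

lemma exists_u:
  fixes \<xi> :: "'x \<Rightarrow> complex"
  assumes xi: "\<xi> \<in> L2 M" and Dv: "Dv \<in> sets M" "emeasure M Dv < \<infinity>"
    and X: "X \<in> sets M" "X \<subseteq> Dv" "0 < emeasure M X" "emeasure M X < emeasure M Dv"
  shows "\<exists>u\<in>L2 M. (\<forall>x. x \<notin> Dv \<longrightarrow> u x = 0) \<and> (LINT x|M. u x * cnj (\<xi> x)) = 0 \<and> 0 < (LINT x|M. (cmod (u x))\<^sup>2)"
proof -
  define Y where "Y = Dv - X"
  have Y: "Y \<in> sets M" "Y \<subseteq> Dv" using Dv X unfolding Y_def by auto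
  have XY: "X \<inter> Y = {}" unfolding Y_def by auto
  have Yfin: "emeasure M Y < \<infinity>" using emeasure_mono[OF Y(2) Dv(1)] Dv(2) by simp
  have Xfin: "emeasure M X < \<infinity>" using X(4) Dv(2) by simp
  have Ypos: "0 < emeasure M Y"
  proof (rule ccontr)
    assume "\<not> 0 < emeasure M Y"
    then have Y0: "emeasure M Y = 0" by simp
    have "emeasure M Dv \<le> emeasure M (X \<union> Y)" using Y X Dv unfolding Y_def by (intro emeasure_mono) auto
    also have "\<dots> \<le> emeasure M X + emeasure M Y" using X(1) Y(1) by (rule emeasure_subadditive)
    finally show False using Y0 X(4) by simp
  qed
  have xim[measurable]: "\<xi> \<in> borel_measurable M" using L2_D(1)[OF xi] .
  have xint: "integrable M (\<lambda>x. (cmod (\<xi> x))\<^sup>2)" using xi unfolding L2_def by simp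
  define a where "a = (LINT x|M. indicator X x * (cmod (\<xi> x))\<^sup>2)"
  define b where "b = (LINT x|M. indicator Y x * (cmod (\<xi> x))\<^sup>2)"
  have intX: "integrable M (\<lambda>x. indicator X x * (cmod (\<xi> x))\<^sup>2)"
    using integrable_mult_indicator[OF X(1) xint] by simp
  have intY: "integrable M (\<lambda>x. indicator Y x * (cmod (\<xi> x))\<^sup>2)"
    using integrable_mult_indicator[OF Y(1) xint] by simp
  have a0: "0 \<le> a" unfolding a_def by (rule Bochner_Integration.integral_nonneg) simp
  have b0: "0 \<le> b" unfolding b_def by (rule Bochner_Integration.integral_nonneg) simp
  show ?thesis
  proof (cases "a = 0")
    case True
    show ?thesis by (rule u_zero_case[OF xi X(1,2,3) Xfin]) (use True a_def in simp)
  next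
    case aF: False
    show ?thesis
    proof (cases "b = 0")
      case True
      show ?thesis by (rule u_zero_case[OF xi Y(1,2) Ypos Yfin]) (use True b_def in simp)
    next
      case bF: False
      have apos: "0 < a" and bpos: "0 < b" using a0 b0 aF bF by auto
      define w where "w x = b * indicator X x - a * indicator Y x" for x
      define u where "u x = complex_of_real (w x) * \<xi> x" for x
      have wm[measurable]: "w \<in> borel_measurable M" unfolding w_def[abs_def] using X(1) Y(1) by measurable
      have um[measurable]: "u \<in> borel_measurable M" unfolding u_def[abs_def] by measurable
      have usq: "(cmod (u x))\<^sup>2 = (w x)\<^sup>2 * (cmod (\<xi> x))\<^sup>2" for x
        by (simp add: u_def norm_mult power_mult_distrib)
      have wsq: "(w x)\<^sup>2 = b\<^sup>2 * indicator X x + a\<^sup>2 * indicator Y x" for x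
        using XY by (auto simp: w_def indicator_def)
      have wb: "(w x)\<^sup>2 \<le> (a + b)\<^sup>2" for x
        unfolding wsq using apos bpos XY
        by (auto simp: indicator_def power2_eq_square intro: mult_mono add_increasing add_increasing2)
      have uL2: "u \<in> L2 M"
        unfolding L2_def
      proof (intro CollectI conjI um)
        show "integrable M (\<lambda>x. (cmod (u x))\<^sup>2)"
        proof (rule Bochner_Integration.integrable_bound)
          show "integrable M (\<lambda>x. (a + b)\<^sup>2 * (cmod (\<xi> x))\<^sup>2)" using xint by simp
          show "(\<lambda>x. (cmod (u x))\<^sup>2) \<in> borel_measurable M" by measurable
          show "AE x in M. norm ((cmod (u x))\<^sup>2) \<le> norm ((a + b)\<^sup>2 * (cmod (\<xi> x))\<^sup>2)"
          proof (rule AE_I2)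
            fix x
            have "(w x)\<^sup>2 * (cmod (\<xi> x))\<^sup>2 \<le> (a + b)\<^sup>2 * (cmod (\<xi> x))\<^sup>2"
              by (rule mult_right_mono[OF wb]) simp
            then show "norm ((cmod (u x))\<^sup>2) \<le> norm ((a + b)\<^sup>2 * (cmod (\<xi> x))\<^sup>2)"
              by (simp add: usq)
          qed
        qed
      qed
      have zero: "\<forall>x. x \<notin> Dv \<longrightarrow> u x = 0"
        using X(2) Y(2) by (auto simp: u_def w_def indicator_def)
      have pw: "u x * cnj (\<xi> x) = complex_of_real (b * (indicator X x * (cmod (\<xi> x))\<^sup>2) - a * (indicator Y x * (cmod (\<xi> x))\<^sup>2))" for x
      proof -
        have "u x * cnj (\<xi> x) = complex_of_real (w x) * (\<xi> x * cnj (\<xi> x))" by (simp add: u_def mult.assoc)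
        also have "\<dots> = complex_of_real (w x) * complex_of_real ((cmod (\<xi> x))\<^sup>2)"
          by (simp only: complex_norm_square)
        also have "\<dots> = complex_of_real (w x * (cmod (\<xi> x))\<^sup>2)" by simp
        finally show ?thesis by (simp add: w_def algebra_simps)
      qed
      have orth: "(LINT x|M. u x * cnj (\<xi> x)) = 0"
      proof -
        have "(LINT x|M. u x * cnj (\<xi> x)) = complex_of_real (LINT x|M. b * (indicator X x * (cmod (\<xi> x))\<^sup>2) - a * (indicator Y x * (cmod (\<xi> x))\<^sup>2))"
          by (simp only: pw integral_complex_of_real)
        also have "(LINT x|M. b * (indicator X x * (cmod (\<xi> x))\<^sup>2) - a * (indicator Y x * (cmod (\<xi> x))\<^sup>2)) = b * a - a * b"
          using intX intY by (simp add: a_def b_def)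
        finally show ?thesis by simp
      qed
      have "(LINT x|M. (cmod (u x))\<^sup>2) = (LINT x|M. b\<^sup>2 * (indicator X x * (cmod (\<xi> x))\<^sup>2) + a\<^sup>2 * (indicator Y x * (cmod (\<xi> x))\<^sup>2))"
        by (simp add: usq wsq algebra_simps)
      also have "\<dots> = b\<^sup>2 * a + a\<^sup>2 * b" using intX intY by (simp add: a_def b_def)
      finally have pos: "0 < (LINT x|M. (cmod (u x))\<^sup>2)" using apos bpos by (simp add: add_pos_pos)
      show ?thesis using uL2 zero orth pos by blast
    qed
  qed
qed

locale ctx =
  fixes r s :: "'e \<Rightarrow> 'v" and M :: "'x measure"
    and D :: "('v,'e) gpath \<Rightarrow> 'x set" and t :: "('v,'e) gpath \<Rightarrow> 'x \<Rightarrow> 'x"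
    and cod :: "nat \<Rightarrow> 'x \<Rightarrow> 'x" and f :: "('v,'e) gpath \<Rightarrow> 'x \<Rightarrow> complex"
  assumes ES: "E_sbfs r s M D t cod" and PR: "proj_rep r s M D t cod f"
begin

lemma sb: "sbfs M {p. is_path r s p \<and> plen p = m} D t (cod m)"
  using ES unfolding E_sbfs_def by blast

lemma path_props:
  assumes p: "is_path r s p"
  shows "D p \<in> sets M" "0 < emeasure M (D p)" "emeasure M (D p) < \<infinity>"
    "t p \<in> measurable (restrict_space M (D p)) M" "t p ` D p \<in> sets M"
    "pos_RN_deriv M (D p) (t p)" "AE x in M. x \<in> D p \<longrightarrow> cod (plen p) (t p x) = x"
    "cod (plen p) \<in> measurable M M"
proof -
  have pI: "p \<in> {q. is_path r s q \<and> plen q = plen p}" using p by simp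
  note S = sb[of "plen p", unfolded sbfs_def]
  show "D p \<in> sets M" "0 < emeasure M (D p)" "emeasure M (D p) < \<infinity>"
    "t p \<in> measurable (restrict_space M (D p)) M" "t p ` D p \<in> sets M"
    "pos_RN_deriv M (D p) (t p)" "AE x in M. x \<in> D p \<longrightarrow> cod (plen p) (t p x) = x"
    "cod (plen p) \<in> measurable M M"
  proof -
    note A1 = bspec[OF S[THEN conjunct1] pI]
    note A2 = bspec[OF S[THEN conjunct2, THEN conjunct1] pI]
    note A3 = bspec[OF S[THEN conjunct2, THEN conjunct2, THEN conjunct1] pI]
    note A6 = bspec[OF S[THEN conjunct2, THEN conjunct2, THEN conjunct2, THEN conjunct2, THEN conjunct2, THEN conjunct1] pI]
    note A7 = S[THEN conjunct2, THEN conjunct2, THEN conjunct2, THEN conjunct2, THEN conjunct2, THEN conjunct2, THEN conjunct1]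
    note A8 = bspec[OF S[THEN conjunct2, THEN conjunct2, THEN conjunct2, THEN conjunct2, THEN conjunct2, THEN conjunct2, THEN conjunct2] pI]
    show "D p \<in> sets M" "0 < emeasure M (D p)" "emeasure M (D p) < \<infinity>"
    "t p \<in> measurable (restrict_space M (D p)) M" "t p ` D p \<in> sets M"
    "pos_RN_deriv M (D p) (t p)" "AE x in M. x \<in> D p \<longrightarrow> cod (plen p) (t p x) = x"
    "cod (plen p) \<in> measurable M M"
      using A1 A2 A3 A6 A7 A8 by simp_all
  qed
qed

lemma f_props:
  assumes p: "is_path r s p"
  shows "f p \<in> borel_measurable M" "integrable M (\<lambda>x. (cmod (f p x))\<^sup>2)"
    "\<And>A. A \<in> sets M \<Longrightarrow> emeasure M {x \<in> D p. t p x \<in> A} = (\<integral>\<^sup>+x\<in>A. ennreal ((cmod (f p x))\<^sup>2) \<partial>M)"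
proof -
  have "f p \<in> L2 M \<and> (\<forall>A \<in> sets M. emeasure M {x \<in> D p. t p x \<in> A}
                        = (\<integral>\<^sup>+x\<in>A. ennreal ((cmod (f p x))\<^sup>2) \<partial>M))"
    using PR p unfolding proj_rep_def by blast
  then show "f p \<in> borel_measurable M" "integrable M (\<lambda>x. (cmod (f p x))\<^sup>2)"
    "\<And>A. A \<in> sets M \<Longrightarrow> emeasure M {x \<in> D p. t p x \<in> A} = (\<integral>\<^sup>+x\<in>A. ennreal ((cmod (f p x))\<^sup>2) \<partial>M)"
    unfolding L2_def by auto
qed

lemma Dsub: "is_path r s p \<Longrightarrow> D p \<subseteq> space M"
  using path_props(1) sets.sets_into_space by blast

lemma preimg_sets:
  assumes p: "is_path r s p" and A: "A \<in> sets M"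
  shows "{x \<in> D p. t p x \<in> A} \<in> sets M"
proof -
  have "t p -` A \<inter> space (restrict_space M (D p)) \<in> sets (restrict_space M (D p))"
    using measurable_sets[OF path_props(4)[OF p] A] .
  moreover have "t p -` A \<inter> space (restrict_space M (D p)) = {x \<in> D p. t p x \<in> A}"
    using Dsub[OF p] by (auto simp: space_restrict_space)
  moreover have "D p \<inter> space M \<in> sets M" using Dsub[OF p] path_props(1)[OF p] by (simp add: Int_absorb2)
  ultimately show ?thesis using sets_restrict_space_iff by metis
qed

lemma distr_eq:
  assumes p: "is_path r s p"
  shows "distr (restrict_space M (D p)) M (t p) = density M (\<lambda>x. ennreal ((cmod (f p x))\<^sup>2))"
proof (rule measure_eqI)
  show "sets (distr (restrict_space M (D p)) M (t p)) = sets (density M (\<lambda>x. ennreal ((cmod (f p x))\<^sup>2)))"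
    by simp
next
  fix A assume "A \<in> sets (distr (restrict_space M (D p)) M (t p))"
  then have A: "A \<in> sets M" by simp
  have Dp: "D p \<inter> space M \<in> sets M" using Dsub[OF p] path_props(1)[OF p] by (simp add: Int_absorb2)
  have "emeasure (distr (restrict_space M (D p)) M (t p)) A
      = emeasure (restrict_space M (D p)) (t p -` A \<inter> space (restrict_space M (D p)))"
    using path_props(4)[OF p] A by (rule emeasure_distr)
  also have "t p -` A \<inter> space (restrict_space M (D p)) = {x \<in> D p. t p x \<in> A}"
    using Dsub[OF p] by (auto simp: space_restrict_space)
  also have "emeasure (restrict_space M (D p)) {x \<in> D p. t p x \<in> A} = emeasure M {x \<in> D p. t p x \<in> A}"
    using Dp by (intro emeasure_restrict_space) auto
  also have "\<dots> = (\<integral>\<^sup>+x\<in>A. ennreal ((cmod (f p x))\<^sup>2) \<partial>M)"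
    using f_props(3)[OF p A] .
  also have "\<dots> = emeasure (density M (\<lambda>x. ennreal ((cmod (f p x))\<^sup>2))) A"
    using A f_props(1)[OF p] by (subst emeasure_density) auto
  finally show "emeasure (distr (restrict_space M (D p)) M (t p)) A =
    emeasure (density M (\<lambda>x. ennreal ((cmod (f p x))\<^sup>2))) A" .
qed

lemma CV:
  assumes p: "is_path r s p" and phi: "\<phi> \<in> borel_measurable M"
  shows "(\<integral>\<^sup>+x. ennreal ((cmod (f p x))\<^sup>2) * \<phi> x \<partial>M) = (\<integral>\<^sup>+x. \<phi> (t p x) * indicator (D p) x \<partial>M)"
proof -
  have Dp: "D p \<inter> space M \<in> sets M" using Dsub[OF p] path_props(1)[OF p] by (simp add: Int_absorb2)
  have "(\<integral>\<^sup>+x. ennreal ((cmod (f p x))\<^sup>2) * \<phi> x \<partial>M)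
     = integral\<^sup>N (density M (\<lambda>x. ennreal ((cmod (f p x))\<^sup>2))) \<phi>"
    using f_props(1)[OF p] phi by (subst nn_integral_density) auto
  also have "\<dots> = integral\<^sup>N (distr (restrict_space M (D p)) M (t p)) \<phi>"
    by (simp add: distr_eq[OF p])
  also have "\<dots> = (\<integral>\<^sup>+x. \<phi> (t p x) \<partial>restrict_space M (D p))"
    using path_props(4)[OF p] phi by (subst nn_integral_distr) auto
  also have "\<dots> = (\<integral>\<^sup>+x. \<phi> (t p x) * indicator (D p) x \<partial>M)"
    using Dp by (rule nn_integral_restrict_space)
  finally show ?thesis .
qed

lemma CVc:
  fixes \<phi> :: "'x \<Rightarrow> complex"
  assumes p: "is_path r s p" and phi: "\<phi> \<in> borel_measurable M"
  shows "(LINT x|M. (cmod (f p x))\<^sup>2 *\<^sub>R \<phi> x) = (LINT x|M. indicator (D p) x *\<^sub>R \<phi> (t p x))"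
proof -
  have Dp: "D p \<inter> space M \<in> sets M" using Dsub[OF p] path_props(1)[OF p] by (simp add: Int_absorb2)
  have "(LINT x|M. (cmod (f p x))\<^sup>2 *\<^sub>R \<phi> x)
     = integral\<^sup>L (density M (\<lambda>x. ennreal ((cmod (f p x))\<^sup>2))) \<phi>"
    using f_props(1)[OF p] phi by (subst integral_density) auto
  also have "\<dots> = integral\<^sup>L (distr (restrict_space M (D p)) M (t p)) \<phi>"
    by (simp add: distr_eq[OF p])
  also have "\<dots> = (LINT x|restrict_space M (D p). \<phi> (t p x))"
    using path_props(4)[OF p] phi by (subst integral_distr) auto
  also have "\<dots> = (LINT x|M. indicator (D p) x *\<^sub>R \<phi> (t p x))"
    using Dp by (rule integral_restrict_space)
  finally show ?thesis .
qed

lemma img_null: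
  assumes p: "is_path r s p" and N: "N \<in> null_sets M" "N \<subseteq> D p"
  shows "t p ` N \<in> null_sets M"
proof -
  obtain \<Phi> where Phi: "\<Phi> \<in> borel_measurable M"
    "\<forall>A \<in> sets M. A \<subseteq> D p \<longrightarrow> t p ` A \<in> sets M \<and> emeasure M (t p ` A) = (\<integral>\<^sup>+x\<in>A. \<Phi> x \<partial>M)"
    using path_props(6)[OF p] unfolding pos_RN_deriv_def by blast
  have "t p ` N \<in> sets M \<and> emeasure M (t p ` N) = (\<integral>\<^sup>+x\<in>N. \<Phi> x \<partial>M)"
    using Phi(2) N by blast
  moreover have "(\<integral>\<^sup>+x\<in>N. \<Phi> x \<partial>M) = 0" using nn_integral_null_set[OF N(1)] .
  ultimately show ?thesis by (auto intro: null_setsI)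
qed

lemma img_AE:
  assumes p: "is_path r s p" and ae: "AE x in M. x \<in> D p \<longrightarrow> P x"
  shows "AE y in M. y \<in> t p ` D p \<longrightarrow> (\<exists>x\<in>D p. y = t p x \<and> P x)"
proof -
  from ae obtain N where N: "{x \<in> space M. \<not> (x \<in> D p \<longrightarrow> P x)} \<subseteq> N" "emeasure M N = 0" "N \<in> sets M"
    by (rule AE_E)
  have DpS: "D p \<in> sets M" using path_props(1)[OF p] .
  have "N \<inter> D p \<in> null_sets M" using N DpS
    using null_set_Int1[of N M "D p"] by (auto simp: Int_commute intro: null_setsI)
  then have nul: "t p ` (N \<inter> D p) \<in> null_sets M" by (rule img_null[OF p]) auto
  show ?thesis
  proof (rule AE_I'[OF nul], rule subsetI)
    fix y assume "y \<in> {y \<in> space M. \<not> (y \<in> t p ` D p \<longrightarrow> (\<exists>x\<in>D p. y = t p x \<and> P x))}"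
    then obtain x where x: "x \<in> D p" "y = t p x" "\<not> P x" by blast
    then have "x \<in> N" using N(1) Dsub[OF p] by auto
    then show "y \<in> t p ` (N \<inter> D p)" using x by auto
  qed
qed

lemma comp_AE: "composable r s p q \<Longrightarrow>
        (AE x in M. (x \<in> D (pcomp p q) \<longleftrightarrow> x \<in> D q \<and> t q x \<in> D p) \<and>
                    (x \<in> D (pcomp p q) \<longrightarrow> t p (t q x) = t (pcomp p q) x))"
  using ES[unfolded E_sbfs_def, THEN conjunct2, THEN conjunct2, THEN conjunct1] by blast

lemma vtx_id: "x \<in> D (w, []) \<Longrightarrow> t (w, []) x = x"
  using ES[unfolded E_sbfs_def, THEN conjunct2, THEN conjunct1] by blast

lemma vtx_path: "is_path r s (w, [])" by (simp add: is_path_def)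

lemma vtx_img: "t (w, []) ` D (w, []) = D (w, [])"
  using vtx_id by (auto simp: image_iff)

lemma to_vtx:
  assumes q: "is_path r s q"
  shows "AE x in M. x \<in> D q \<longrightarrow> t q x \<in> D (fst q, [])"
proof -
  have c: "composable r s (fst q, []) q"
    using q by (simp add: composable_def is_path_def psource_def)
  have pc: "pcomp (fst q, []) q = q" by (simp add: pcomp_def)
  show ?thesis using comp_AE[OF c] unfolding pc by (rule AE_mp) auto
qed

lemma vtx_disj:
  assumes "w \<noteq> v"
  shows "D (v, []) \<inter> D (w, []) \<in> null_sets M"
proof -
  have S4: "\<forall>i\<in>{p. is_path r s p \<and> plen p = 0}. \<forall>j\<in>{p. is_path r s p \<and> plen p = 0}. i \<noteq> j \<longrightarrow> emeasure M (t i ` D i \<inter> t j ` D j) = 0"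
    using sb[of 0] unfolding sbfs_def by (elim conjE) assumption
  have "emeasure M (t (v,[]) ` D (v,[]) \<inter> t (w,[]) ` D (w,[])) = 0"
    using S4 assms vtx_path by (force simp: plen_def)
  then show ?thesis unfolding vtx_img
    using path_props(1)[OF vtx_path] by auto
qed

lemma vanish_off:
  assumes q: "is_path r s q" and ne: "fst q \<noteq> v"
  shows "AE x in M. x \<in> D (v, []) \<longrightarrow> f q x = 0"
proof -
  let ?w = "fst q"
  have Dv: "D (v,[]) \<in> sets M" "D (?w,[]) \<in> sets M" using path_props(1)[OF vtx_path] by auto
  let ?S = "{x \<in> D q. t q x \<in> D (v,[])}"
  let ?S2 = "{x \<in> D q. t q x \<in> D (v,[]) \<inter> D (?w,[])}"
  have nul: "D (v, []) \<inter> D (?w, []) \<in> null_sets M" using vtx_disj ne by blast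
  have "emeasure M ?S2 = (\<integral>\<^sup>+x\<in>D (v, []) \<inter> D (?w, []). ennreal ((cmod (f q x))\<^sup>2) \<partial>M)"
    using f_props(3)[OF q] Dv by blast
  also have "\<dots> = 0" using nn_integral_null_set[OF nul] .
  finally have "emeasure M ?S2 = 0" .
  moreover have "?S2 \<in> sets M" by (rule preimg_sets[OF q]) (use Dv in auto)
  ultimately have "?S2 \<in> null_sets M" by (auto intro: null_setsI)
  then have a1: "AE x in M. x \<notin> ?S2" by (rule AE_not_in)
  have "AE x in M. x \<notin> ?S" using a1 to_vtx[OF q] by eventually_elim auto
  then have "emeasure M ?S = 0"
    using AE_iff_measurable[of ?S M "\<lambda>x. x \<notin> ?S"] preimg_sets[OF q Dv(1)] Dsub[OF q] by auto
  then have "(\<integral>\<^sup>+x\<in>D (v, []). ennreal ((cmod (f q x))\<^sup>2) \<partial>M) = 0"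
    using f_props(3)[OF q Dv(1)] by simp
  then have "AE x in M. ennreal ((cmod (f q x))\<^sup>2) * indicator (D (v, [])) x = 0"
    using f_props(1)[OF q] Dv by (subst nn_integral_0_iff_AE[symmetric]) auto
  then show ?thesis by (rule AE_mp) (auto simp: indicator_def)
qed

lemma nz_on_range:
  assumes q: "is_path r s q"
  shows "AE x in M. x \<in> t q ` D q \<longrightarrow> f q x \<noteq> 0"
proof -
  let ?Z = "{x \<in> space M. f q x = 0}"
  have Z: "?Z \<in> sets M" using f_props(1)[OF q] by measurable
  have "emeasure M {x \<in> D q. t q x \<in> ?Z} = (\<integral>\<^sup>+x\<in>?Z. ennreal ((cmod (f q x))\<^sup>2) \<partial>M)"
    using f_props(3)[OF q Z] .
  also have "\<dots> = (\<integral>\<^sup>+x. 0 \<partial>M)" by (rule nn_integral_cong) (auto simp: indicator_def)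
  finally have "emeasure M {x \<in> D q. t q x \<in> ?Z} = 0" by simp
  then have "{x \<in> D q. t q x \<in> ?Z} \<in> null_sets M" using preimg_sets[OF q Z] by (auto intro: null_setsI)
  then have "AE x in M. x \<notin> {x \<in> D q. t q x \<in> ?Z}" by (rule AE_not_in)
  then have "AE x in M. x \<in> D q \<longrightarrow> t q x \<notin> ?Z" by (rule AE_mp) auto
  from img_AE[OF q this] AE_space
  show ?thesis by eventually_elim auto
qed

lemma zero_off_range:
  assumes q: "is_path r s q"
  shows "AE x in M. x \<notin> t q ` D q \<longrightarrow> f q x = 0"
proof -
  let ?W = "space M - t q ` D q"
  have W: "?W \<in> sets M" using path_props(5)[OF q] by auto
  have e: "{x \<in> D q. t q x \<in> ?W} = {}" by auto
  have "(\<integral>\<^sup>+x\<in>?W. ennreal ((cmod (f q x))\<^sup>2) \<partial>M) = 0"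
    using f_props(3)[OF q W, unfolded e] by simp
  then have "AE x in M. ennreal ((cmod (f q x))\<^sup>2) * indicator ?W x = 0"
    using f_props(1)[OF q] W by (subst nn_integral_0_iff_AE[symmetric]) auto
  with AE_space show ?thesis by eventually_elim (auto simp: indicator_def)
qed

lemma cod_on_range:
  assumes q: "is_path r s q"
  shows "AE x in M. x \<in> t q ` D q \<longrightarrow> cod (plen q) x \<in> D q \<and> t q (cod (plen q) x) = x"
  using img_AE[OF q path_props(7)[OF q]] by (rule AE_mp) auto

lemma CVr:
  fixes \<phi> :: "'x \<Rightarrow> complex"
  assumes p: "is_path r s p" and phi: "\<phi> \<in> borel_measurable M"
  shows "(LINT x|M. (cmod (f p x))\<^sup>2 *\<^sub>R \<phi> x) = (LINT x|restrict_space M (D p). \<phi> (t p x))"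
proof -
  have "(LINT x|M. (cmod (f p x))\<^sup>2 *\<^sub>R \<phi> x)
     = integral\<^sup>L (density M (\<lambda>x. ennreal ((cmod (f p x))\<^sup>2))) \<phi>"
    using f_props(1)[OF p] phi by (subst integral_density) auto
  also have "\<dots> = integral\<^sup>L (distr (restrict_space M (D p)) M (t p)) \<phi>"
    by (simp add: distr_eq[OF p])
  also have "\<dots> = (LINT x|restrict_space M (D p). \<phi> (t p x))"
    using path_props(4)[OF p] phi by (subst integral_distr) auto
  finally show ?thesis .
qed

lemma Top_meas:
  assumes p: "is_path r s p" and hm: "h \<in> borel_measurable M"
  shows "Top cod f p h \<in> borel_measurable M"
proof -
  have [measurable]: "(\<lambda>x. h (cod (plen p) x)) \<in> borel_measurable M"
    by (rule measurable_compose[OF path_props(8)[OF p] hm])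
  have [measurable]: "f p \<in> borel_measurable M" by (rule f_props(1)[OF p])
  show ?thesis unfolding Top_def by measurable
qed

lemma Top_L2:
  assumes p: "is_path r s p" and h: "h \<in> L2 M"
  shows "Top cod f p h \<in> L2 M"
proof (rule L2_I)
  have hm: "h \<in> borel_measurable M" by (rule L2_D(1)[OF h])
  show "Top cod f p h \<in> borel_measurable M" by (rule Top_meas[OF p hm])
  have hc: "(\<lambda>x. h (cod (plen p) x)) \<in> borel_measurable M"
    by (rule measurable_compose[OF path_props(8)[OF p] hm])
  have "(\<integral>\<^sup>+x. ennreal ((cmod (Top cod f p h x))\<^sup>2) \<partial>M)
      = (\<integral>\<^sup>+x. ennreal ((cmod (f p x))\<^sup>2) * ennreal ((cmod (h (cod (plen p) x)))\<^sup>2) \<partial>M)"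
    by (simp add: Top_def norm_mult power_mult_distrib ennreal_mult)
  also have "\<dots> = (\<integral>\<^sup>+x. ennreal ((cmod (h (cod (plen p) (t p x))))\<^sup>2) * indicator (D p) x \<partial>M)"
    using CV[OF p, where \<phi>="\<lambda>y. ennreal ((cmod (h (cod (plen p) y)))\<^sup>2)"] hc by simp
  also have "\<dots> = (\<integral>\<^sup>+x. ennreal ((cmod (h x))\<^sup>2) * indicator (D p) x \<partial>M)"
    by (rule nn_integral_cong_AE) (use path_props(7)[OF p] in \<open>rule AE_mp, auto simp: indicator_def\<close>)
  also have "\<dots> \<le> (\<integral>\<^sup>+x. ennreal ((cmod (h x))\<^sup>2) \<partial>M)"
    by (rule nn_integral_mono) (simp add: indicator_def)
  also have "\<dots> < \<infinity>" using L2_D(2)[OF h] .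
  finally show "(\<integral>\<^sup>+x. ennreal ((cmod (Top cod f p h x))\<^sup>2) \<partial>M) < \<infinity>" .
qed

lemma orth_other:
  assumes p: "is_path r s p" "fst p \<noteq> v" and u0: "\<And>x. x \<notin> D (v, []) \<Longrightarrow> u x = 0"
  shows "(LINT x|M. Top cod f p h x * cnj (u x)) = 0"
proof (rule integral_eq_zero_AE)
  show "AE x in M. Top cod f p h x * cnj (u x) = 0"
    using vanish_off[OF p]
  proof (rule AE_mp, intro AE_I2 impI)
    fix x assume a: "x \<in> D (v, []) \<longrightarrow> f p x = 0"
    show "Top cod f p h x * cnj (u x) = 0"
    proof (cases "x \<in> D (v, [])")
      case True
      then show ?thesis using a by (simp add: Top_def)
    next
      case False
      then show ?thesis using u0 by simp
    qed
  qed
qed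

lemma range_ae_Dv:
  assumes cyc: "is_cycle r s es" "\<not> has_entrance r s es" "v \<in> r ` set es"
    and cntP: "countable (UNIV :: ('v,'e) gpath set)" and p: "is_path r s p" "fst p = v"
  shows "AE x in M. x \<in> D (v,[]) \<longrightarrow> f p x \<noteq> 0"
proof -
  let ?I = "{q. is_path r s q \<and> plen q = plen p}"
  have cov: "AE x in M. \<exists>i\<in>?I. x \<in> t i ` D i"
    using sb[of "plen p", unfolded sbfs_def, THEN conjunct2, THEN conjunct2, THEN conjunct2, THEN conjunct2, THEN conjunct1] .
  have neq: "fst q \<noteq> v" if q: "q \<in> ?I" "q \<noteq> p" for q
  proof
    assume fq: "fst q = v"
    have eq: "(v, snd q) = q" using fq by (cases q) auto
    have ep: "(v, snd p) = p" using p(2) by (cases p) auto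
    have "snd q = snd p"
    proof (rule unique_paths[OF cyc(1) cyc(2) cyc(3)])
      show "is_path r s (v, snd q)" using q eq by simp
      show "is_path r s (v, snd p)" using p(1) ep by simp
      show "length (snd q) = length (snd p)" using q by (simp add: plen_def)
    qed
    then have "q = p" using eq ep by metis
    with q(2) show False by simp
  qed
  have "\<forall>q\<in>?I - {p}. AE x in M. x \<in> D (v,[]) \<longrightarrow> x \<notin> t q ` D q"
  proof
    fix q assume q: "q \<in> ?I - {p}"
    have qp: "is_path r s q" using q by simp
    have "fst q \<noteq> v" using neq q by blast
    from vanish_off[OF qp this] nz_on_range[OF qp]
    show "AE x in M. x \<in> D (v,[]) \<longrightarrow> x \<notin> t q ` D q" by eventually_elim auto
  qed
  then have other: "AE x in M. \<forall>q\<in>?I - {p}. x \<in> D (v,[]) \<longrightarrow> x \<notin> t q ` D q"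
    by (subst AE_ball_countable) (auto intro: countable_subset[OF _ cntP])
  from cov other nz_on_range[OF p(1)]
  show ?thesis
  proof eventually_elim
    case (elim x)
    show ?case
    proof
      assume xD: "x \<in> D (v,[])"
      from elim(1) obtain i where i: "i \<in> ?I" "x \<in> t i ` D i" by blast
      have "i = p"
      proof (rule ccontr)
        assume "i \<noteq> p"
        then have "i \<in> ?I - {p}" using i by simp
        then show False using elim(2) xD i(2) by blast
      qed
      then show "f p x \<noteq> 0" using elim(3) i(2) by simp
    qed
  qed
qed

lemma orth_cycle:
  assumes cyc: "is_cycle r s es" "\<not> has_entrance r s es" "v \<in> r ` set es"
    and cntP: "countable (UNIV :: ('v,'e) gpath set)" and p: "is_path r s p" "fst p = v"
    and u: "u \<in> L2 M" and u0: "\<And>x. x \<notin> D (v, []) \<Longrightarrow> u x = 0"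
    and xi: "\<xi> \<in> L2 M" and orth: "(LINT x|M. u x * cnj (\<xi> x)) = 0"
    and adj: "adjoint_value M (Top cod f p) \<xi> h"
  shows "(LINT x|M. Top cod f p h x * cnj (u x)) = 0"
proof -
  note pp = p(1)
  have Fm[measurable]: "f p \<in> borel_measurable M" using f_props(1)[OF pp] .
  have um[measurable]: "u \<in> borel_measurable M" using L2_D(1)[OF u] .
  have xim[measurable]: "\<xi> \<in> borel_measurable M" using L2_D(1)[OF xi] .
  have h: "h \<in> L2 M" and adjeq: "\<And>g. g \<in> L2 M \<Longrightarrow> (LINT x|M. Top cod f p g x * cnj (\<xi> x)) = (LINT x|M. g x * cnj (h x))"
    using adj unfolding adjoint_value_def by auto
  have hm[measurable]: "h \<in> borel_measurable M" using L2_D(1)[OF h] .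
  have Dps: "D p \<inter> space M \<in> sets M" using Dsub[OF pp] path_props(1)[OF pp] by (simp add: Int_absorb2)
  define g where "g x = (if x \<in> D p then u (t p x) / f p (t p x) else 0)" for x
  have gm[measurable]: "g \<in> borel_measurable M"
  proof -
    have "(\<lambda>x. u x / f p x) \<in> borel_measurable M" by measurable
    from measurable_compose[OF path_props(4)[OF pp] this]
    have "(\<lambda>x. u (t p x) / f p (t p x)) \<in> borel_measurable (restrict_space M (D p))" .
    then show ?thesis unfolding g_def[abs_def]
      by (subst (asm) measurable_restrict_space_iff[OF Dps]) auto
  qed
  have gL2: "g \<in> L2 M"
  proof (rule L2_I[OF gm])
    have "(\<integral>\<^sup>+x. ennreal ((cmod (g x))\<^sup>2) \<partial>M) = (\<integral>\<^sup>+x. ennreal ((cmod (u (t p x) / f p (t p x)))\<^sup>2) * indicator (D p) x \<partial>M)"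
      by (rule nn_integral_cong) (simp add: g_def indicator_def)
    also have "\<dots> = (\<integral>\<^sup>+x. ennreal ((cmod (f p x))\<^sup>2) * ennreal ((cmod (u x / f p x))\<^sup>2) \<partial>M)"
      using CV[OF pp, where \<phi>="\<lambda>y. ennreal ((cmod (u y / f p y))\<^sup>2)"] by simp
    also have "\<dots> \<le> (\<integral>\<^sup>+x. ennreal ((cmod (u x))\<^sup>2) \<partial>M)"
    proof (rule nn_integral_mono)
      fix x
      have le: "(cmod (f p x))\<^sup>2 * (cmod (u x / f p x))\<^sup>2 \<le> (cmod (u x))\<^sup>2"
        by (cases "f p x = 0") (auto simp: norm_divide power_divide)
      show "ennreal ((cmod (f p x))\<^sup>2) * ennreal ((cmod (u x / f p x))\<^sup>2) \<le> ennreal ((cmod (u x))\<^sup>2)"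
        using le by (simp add: ennreal_mult[symmetric] ennreal_leI)
    qed
    also have "\<dots> < \<infinity>" using L2_D(2)[OF u] .
    finally show "(\<integral>\<^sup>+x. ennreal ((cmod (g x))\<^sup>2) \<partial>M) < \<infinity>" .
  qed
  have Tg: "AE x in M. Top cod f p g x = u x"
    using zero_off_range[OF pp] cod_on_range[OF pp] range_ae_Dv[OF cyc cntP p]
  proof eventually_elim
    case (elim x)
    show ?case
    proof (cases "f p x = 0")
      case True
      then have "x \<notin> D (v,[])" using elim(3) by auto
      then show ?thesis using True u0 by (simp add: Top_def)
    next
      case False
      then have "x \<in> t p ` D p" using elim(1) by auto
      then have "cod (plen p) x \<in> D p" "t p (cod (plen p) x) = x" using elim(2) by auto
      then show ?thesis using False by (simp add: Top_def g_def)
    qed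
  qed
  have Tgm[measurable]: "Top cod f p g \<in> borel_measurable M" by (rule Top_meas[OF pp gm])
  have Thm[measurable]: "Top cod f p h \<in> borel_measurable M" by (rule Top_meas[OF pp hm])
  have "(LINT x|M. g x * cnj (h x)) = (LINT x|M. Top cod f p g x * cnj (\<xi> x))" using adjeq[OF gL2] by simp
  also have "\<dots> = (LINT x|M. u x * cnj (\<xi> x))"
    by (rule integral_cong_AE) (measurable, use Tg in \<open>rule AE_mp, auto\<close>)
  also have "\<dots> = 0" by (rule orth)
  finally have gh: "(LINT x|M. g x * cnj (h x)) = 0" .
  have hcg: "(LINT x|M. h x * cnj (g x)) = 0"
  proof -
    have "(LINT x|M. h x * cnj (g x)) = (LINT x|M. cnj (g x * cnj (h x)))" by (simp add: mult.commute)
    also have "\<dots> = cnj (LINT x|M. g x * cnj (h x))" by (rule Bochner_Integration.integral_cnj)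
    finally show ?thesis using gh by simp
  qed
  have hcm: "(\<lambda>y. h (cod (plen p) y) * cnj (g (cod (plen p) y))) \<in> borel_measurable M"
  proof -
    have [measurable]: "cod (plen p) \<in> measurable M M" by (rule path_props(8)[OF pp])
    show ?thesis by measurable
  qed
  have "(LINT x|M. Top cod f p h x * cnj (u x)) = (LINT x|M. Top cod f p h x * cnj (Top cod f p g x))"
    by (rule integral_cong_AE) (measurable, use Tg in \<open>rule AE_mp, auto\<close>)
  also have "\<dots> = (LINT x|M. (cmod (f p x))\<^sup>2 *\<^sub>R (h (cod (plen p) x) * cnj (g (cod (plen p) x))))"
    by (rule Bochner_Integration.integral_cong[OF refl]) (unfold Top_def, rule sq_aux)
  also have "\<dots> = (LINT x|restrict_space M (D p). h (cod (plen p) (t p x)) * cnj (g (cod (plen p) (t p x))))"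
    by (rule CVr[OF pp hcm])
  also have "\<dots> = (LINT x|restrict_space M (D p). h x * cnj (g x))"
  proof (rule integral_cong_AE)
    show "(\<lambda>x. h (cod (plen p) (t p x)) * cnj (g (cod (plen p) (t p x)))) \<in> borel_measurable (restrict_space M (D p))"
      by (rule measurable_compose[OF path_props(4)[OF pp] hcm])
    show "(\<lambda>x. h x * cnj (g x)) \<in> borel_measurable (restrict_space M (D p))"
      by (rule measurable_restrict_space1) measurable
    show "AE x in restrict_space M (D p). h (cod (plen p) (t p x)) * cnj (g (cod (plen p) (t p x))) = h x * cnj (g x)"
      using path_props(7)[OF pp] by (subst AE_restrict_space_iff[OF Dps]) (rule AE_mp, auto)
  qed
  also have "\<dots> = (LINT x|M. indicator (D p) x *\<^sub>R (h x * cnj (g x)))"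
    by (rule integral_restrict_space[OF Dps])
  also have "\<dots> = (LINT x|M. h x * cnj (g x))"
    by (rule Bochner_Integration.integral_cong) (auto simp: g_def indicator_def)
  also have "\<dots> = 0" by (rule hcg)
  finally show ?thesis .
qed

lemma main:
  assumes sf: "sigma_finite_measure M" and rf: "row_finite r" and mon: "monic r s M cod f"
    and cyc: "is_cycle r s es" "\<not> has_entrance r s es" "v \<in> r ` set es"
    and X: "X \<in> sets M" "X \<subseteq> D (v,[])" "0 < emeasure M X" "emeasure M X < emeasure M (D (v,[]))"
  shows False
proof -
  have cntV: "countable (UNIV :: 'v set)"
  proof (rule countable_family[OF sf, of "\<lambda>w. D (w,[])"])
    show "\<And>i. D (i, []) \<in> sets M" using path_props(1)[OF vtx_path] .
    show "\<And>i. 0 < emeasure M (D (i, []))" using path_props(2)[OF vtx_path] .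
    show "\<And>i j. i \<noteq> j \<Longrightarrow> D (i, []) \<inter> D (j, []) \<in> null_sets M" by (rule vtx_disj) auto
  qed
  have cntP: "countable (UNIV :: ('v,'e) gpath set)" by (rule countable_paths[OF cntV rf])
  obtain \<xi> where xi: "\<xi> \<in> L2 M"
    and ds: "dense_span M {Top cod f p h | p h. is_path r s p \<and> adjoint_value M (Top cod f p) \<xi> h}"
    using mon[unfolded monic_def, THEN conjunct2] by blast
  let ?S = "{Top cod f p h | p h. is_path r s p \<and> adjoint_value M (Top cod f p) \<xi> h}"
  obtain u where u: "u \<in> L2 M" "\<forall>x. x \<notin> D (v,[]) \<longrightarrow> u x = 0" "(LINT x|M. u x * cnj (\<xi> x)) = 0"
      "0 < (LINT x|M. (cmod (u x))\<^sup>2)"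
    using exists_u[OF xi path_props(1)[OF vtx_path] path_props(3)[OF vtx_path] X] by blast
  have Sk: "k \<in> L2 M \<and> (LINT x|M. k x * cnj (u x)) = 0" if "k \<in> ?S" for k
  proof -
    from that obtain p h where k: "k = Top cod f p h" "is_path r s p" "adjoint_value M (Top cod f p) \<xi> h"
      by blast
    have "h \<in> L2 M" using k(3) unfolding adjoint_value_def by blast
    then have "k \<in> L2 M" using Top_L2[OF k(2)] k(1) by simp
    moreover have "(LINT x|M. k x * cnj (u x)) = 0"
    proof (cases "fst p = v")
      case True
      show ?thesis unfolding k(1)
        by (rule orth_cycle[OF cyc cntP k(2) True u(1) _ xi u(3) k(3)]) (use u(2) in auto)
    next
      case False
      show ?thesis unfolding k(1) by (rule orth_other[OF k(2) False]) (use u(2) in auto)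
    qed
    ultimately show ?thesis by blast
  qed
  define nu where "nu = (LINT x|M. (cmod (u x))\<^sup>2)"
  have nu: "0 < nu" using u(4) nu_def by simp
  have dsu: "\<forall>\<epsilon>::real. \<epsilon> > 0 \<longrightarrow> (\<exists>F c. finite F \<and> F \<subseteq> ?S \<and>
           (\<integral>\<^sup>+x. ennreal ((cmod (u x - (\<Sum>k\<in>F. c k * k x)))\<^sup>2) \<partial>M) < ennreal (\<epsilon>\<^sup>2))"
    using bspec[OF ds[unfolded dense_span_def] u(1)] .
  have sq: "sqrt nu > 0" using nu by simp
  obtain F c where F: "finite F" "F \<subseteq> ?S"
    "(\<integral>\<^sup>+x. ennreal ((cmod (u x - (\<Sum>k\<in>F. c k * k x)))\<^sup>2) \<partial>M) < ennreal ((sqrt nu)\<^sup>2)"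
    using dsu[rule_format, OF sq] by blast
  have sqn: "(sqrt nu)\<^sup>2 = nu" using nu by simp
  define K where "K x = (\<Sum>k\<in>F. c k * k x)" for x
  have kL2: "\<And>k. k \<in> F \<Longrightarrow> k \<in> L2 M" using F(2) Sk by blast
  have k0: "\<And>k. k \<in> F \<Longrightarrow> (LINT x|M. k x * cnj (u x)) = 0" using F(2) Sk by blast
  have um[measurable]: "u \<in> borel_measurable M" using L2_D(1)[OF u(1)] .
  have Km[measurable]: "K \<in> borel_measurable M"
    unfolding K_def[abs_def]
    by (intro borel_measurable_sum borel_measurable_times borel_measurable_const) (auto intro: L2_D(1) kL2)
  have eqK: "K x * cnj (u x) = (\<Sum>k\<in>F. c k * (k x * cnj (u x)))" for x
    unfolding K_def by (simp add: sum_distrib_right mult.assoc)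
  have Kint: "integrable M (\<lambda>x. K x * cnj (u x))"
    unfolding eqK
    by (rule Bochner_Integration.integrable_sum, rule integrable_mult_right, rule L2_prod_int[OF kL2 u(1)])
  have K0: "(LINT x|M. K x * cnj (u x)) = 0"
  proof -
    have "(LINT x|M. K x * cnj (u x)) = (\<Sum>k\<in>F. c k * (LINT x|M. k x * cnj (u x)))"
      unfolding eqK
      by (subst Bochner_Integration.integral_sum)
         (rule integrable_mult_right, rule L2_prod_int[OF kL2 u(1)], assumption, simp)
    also have "\<dots> = 0" using k0 by simp
    finally show ?thesis .
  qed
  define d where "d x = (cmod (u x - K x))\<^sup>2" for x
  have dm[measurable]: "d \<in> borel_measurable M" unfolding d_def[abs_def] by measurable
  have dnn: "(\<integral>\<^sup>+x. ennreal (d x) \<partial>M) < ennreal nu" using F(3) unfolding d_def K_def sqn .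
  have dint: "integrable M d"
    unfolding integrable_iff_bounded using dm dnn
    by (simp add: d_def) (meson ennreal_less_top order.strict_trans)
  have "ennreal (LINT x|M. d x) = (\<integral>\<^sup>+x. ennreal (d x) \<partial>M)"
    by (rule nn_integral_eq_integral[OF dint, symmetric]) (simp add: d_def)
  then have e1: "ennreal (LINT x|M. d x) < ennreal nu" using dnn by simp
  have "0 \<le> (LINT x|M. d x)" by (rule Bochner_Integration.integral_nonneg) (simp add: d_def)
  then have dlt: "(LINT x|M. d x) < nu" using e1 ennreal_less_iff by blast
  have uint: "integrable M (\<lambda>x. (cmod (u x))\<^sup>2)" using u(1) unfolding L2_def by simp
  have reint: "integrable M (\<lambda>x. Re (K x * cnj (u x)))" using Kint by (rule integrable_Re)
  have i2: "integrable M (\<lambda>x. 2 * Re (K x * cnj (u x)))" by (rule integrable_mult_right) (rule reint)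
  have isum: "integrable M (\<lambda>x. d x + 2 * Re (K x * cnj (u x)))"
    by (rule Bochner_Integration.integrable_add[OF dint i2])
  have "nu \<le> (LINT x|M. d x + 2 * Re (K x * cnj (u x)))"
    unfolding nu_def
  proof (rule integral_mono[OF uint isum])
    fix x
    have "d x + 2 * Re (K x * cnj (u x)) = (cmod (u x))\<^sup>2 + (cmod (K x))\<^sup>2"
      unfolding d_def cmod_power2 by (simp add: power2_eq_square algebra_simps)
    then show "(cmod (u x))\<^sup>2 \<le> d x + 2 * Re (K x * cnj (u x))" by simp
  qed
  also have "\<dots> = (LINT x|M. d x) + (LINT x|M. 2 * Re (K x * cnj (u x)))"
    by (rule Bochner_Integration.integral_add[OF dint i2])
  also have "(LINT x|M. 2 * Re (K x * cnj (u x))) = 2 * (LINT x|M. Re (K x * cnj (u x)))"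
    by (rule Bochner_Integration.integral_mult_right) (rule reint)
  also have "(LINT x|M. Re (K x * cnj (u x))) = Re (LINT x|M. K x * cnj (u x))"
    by (rule integral_Re[OF Kint])
  also have "(LINT x|M. K x * cnj (u x)) = 0" by (rule K0)
  finally show False using dlt by simp
qed

end

theorem corollary3p12:
  fixes r s :: "'e \<Rightarrow> 'v" and M :: "'x measure"
    and D :: "('v,'e) gpath \<Rightarrow> 'x set" and t :: "('v,'e) gpath \<Rightarrow> 'x \<Rightarrow> 'x"
    and cod :: "nat \<Rightarrow> 'x \<Rightarrow> 'x" and f :: "('v,'e) gpath \<Rightarrow> 'x \<Rightarrow> complex"
  assumes "row_finite r" and "source_free r"
    and "\<exists>es. is_cycle r s es \<and> \<not> has_entrance r s es"
    and "sigma_finite_measure M"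
    and "E_sbfs r s M D t cod"
    and "proj_rep r s M D t cod f"
    and "monic r s M cod f"
  shows "\<forall>v. on_cycle_without_entrance r s v \<longrightarrow>
           \<not> (\<exists>Xv \<in> sets M. Xv \<subseteq> D (v, []) \<and> 0 < emeasure M Xv \<and>
                 emeasure M Xv < emeasure M (D (v, [])))"
proof (intro allI impI notI)
  fix v assume oc: "on_cycle_without_entrance r s v"
    and ex: "\<exists>Xv \<in> sets M. Xv \<subseteq> D (v, []) \<and> 0 < emeasure M Xv \<and> emeasure M Xv < emeasure M (D (v, []))"
  from oc obtain es where es: "is_cycle r s es" "\<not> has_entrance r s es" "v \<in> r ` set es"
    unfolding on_cycle_without_entrance_def by blast
  from ex obtain X where X: "X \<in> sets M" "X \<subseteq> D (v, [])" "0 < emeasure M X" "emeasure M X < emeasure M (D (v, []))"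
    by blast
  interpret ctx r s M D t cod f by (unfold_locales) (rule assms(5), rule assms(6))
  show False by (rule main[OF assms(4) assms(1) assms(7) es X])
qed

end
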